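(* Let $\mu>0$, $\sigma\ge0$, and let $\mathbb{F}^{=}_{\mu,\sigma}$ be the class of distributions of nonnegative random variables with mean $\mu$ and standard deviation exactly $\sigma$. Then for every probability distribution $A$ over nonnegative prices, \[\sup_{F\in\mathbb{F}_{\mu,\sigma}}\frac{\mathrm{OPT}(F)}{\mathrm{REV}(A;F)}=\sup_{F\in\mathbb{F}^{=}_{\mu,\sigma}}\frac{\mathrm{OPT}(F)}{\mathrm{REV}(A;F)},\] and consequently \[\inf_A\sup_{F\in\mathbb{F}_{\mu,\sigma}}\frac{\mathrm{OPT}(F)}{\mathrm{REV}(A;F)}=\inf_A\sup_{F\in\mathbb{F}^{=}_{\mu,\sigma}}\frac{\mathrm{OPT}(F)}{\mathrm{REV}(A;F)}.\]
   Context: A nonnegative real random variable is $(\mu,\sigma)$-distributed if its expectation is $\mu$ and its standard deviation is at most $\sigma$; $\mathbb{F}_{\mu,\sigma}$ is the class of such distributions. Single item, single buyer with value $X\sim F$; a (possibly randomized) truthful mechanism is identified with a distribution $A$ over prices $p\ge0$. $\mathrm{REV}(p;F)=p\Pr[X\ge p]$, $\mathrm{REV}(A;F)=\mathbb{E}_{p\sim A}[\mathrm{REV}(p;F)]$, $\mathrm{OPT}(F)=\sup_{p\ge0}\mathrm{REV}(p;F)$. Ratios with zero denominator are interpreted as $+\infty$. *)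

theory Defs
  imports "HOL-Probability.Probability"
begin

definition nonneg_dist :: "real measure \<Rightarrow> bool" where
  "nonneg_dist M \<longleftrightarrow> prob_space M \<and> sets M = sets borel \<and> (AE x in M. 0 \<le> x)"

text \<open>(mu,sigma)-distributed: mean mu, standard deviation at most sigma
  (variance, possibly infinite, at most sigma^2).\<close>
definition F_class :: "real \<Rightarrow> real \<Rightarrow> real measure set" where
  "F_class \<mu> \<sigma> = {F. nonneg_dist F \<and> integrable F (\<lambda>x. x) \<and> (\<integral>x. x \<partial>F) = \<mu> \<and>
      (\<integral>\<^sup>+ x. ennreal ((x - \<mu>)\<^sup>2) \<partial>F) \<le> ennreal (\<sigma>\<^sup>2)}"

definition F_class_eq :: "real \<Rightarrow> real \<Rightarrow> real measure set" where
  "F_class_eq \<mu> \<sigma> = {F. nonneg_dist F \<and> integrable F (\<lambda>x. x) \<and> (\<integral>x. x \<partial>F) = \<mu> \<and>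
      (\<integral>\<^sup>+ x. ennreal ((x - \<mu>)\<^sup>2) \<partial>F) = ennreal (\<sigma>\<^sup>2)}"

definition REV_price :: "real \<Rightarrow> real measure \<Rightarrow> real" where
  "REV_price p F = p * measure F {x. p \<le> x}"

definition REV :: "real measure \<Rightarrow> real measure \<Rightarrow> ennreal" where
  "REV A F = (\<integral>\<^sup>+ p. ennreal (REV_price p F) \<partial>A)"

definition OPT :: "real measure \<Rightarrow> ennreal" where
  "OPT F = (SUP p\<in>{0..}. ennreal (REV_price p F))"

definition ratio :: "real measure \<Rightarrow> real measure \<Rightarrow> ennreal" where
  "ratio A F = (if REV A F = 0 then \<top> else OPT F / REV A F)"

end

theory Submission
  imports Defs
begin

definition mixm :: "real \<Rightarrow> real measure \<Rightarrow> real measure \<Rightarrow> real measure" where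
  "mixm e M N = measure_pmf (bernoulli_pmf e) \<bind> (\<lambda>c. if c then N else M)"

lemma fin_of_prob: "prob_space M \<Longrightarrow> finite_measure M"
  by (simp add: prob_space_def)

locale mixctx =
  fixes e :: real and M N :: "real measure"
  assumes e0: "0 \<le> e" and e1: "e \<le> 1"
    and pM: "prob_space M" and sM: "sets M = sets borel"
    and pN: "prob_space N" and sN: "sets N = sets borel"
begin

lemma kern: "(\<lambda>c. if c then N else M) \<in> measurable (measure_pmf (bernoulli_pmf e)) (subprob_algebra borel)"
  using pM pN sM sN by (auto simp: space_subprob_algebra prob_space_imp_subprob_space)

lemma sets_mix: "sets (mixm e M N) = sets borel"
  unfolding mixm_def using sM sN by (subst sets_bind) auto

lemma space_mix: "space (mixm e M N) = UNIV"
  using sets_eq_imp_space_eq[OF sets_mix] by simp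

lemma nn_mix:
  assumes f: "f \<in> borel_measurable borel"
  shows "(\<integral>\<^sup>+x. f x \<partial>mixm e M N) = ennreal (1 - e) * (\<integral>\<^sup>+x. f x \<partial>M) + ennreal e * (\<integral>\<^sup>+x. f x \<partial>N)"
proof -
  have "(\<integral>\<^sup>+x. f x \<partial>mixm e M N) = (\<integral>\<^sup>+c. \<integral>\<^sup>+y. f y \<partial>(if c then N else M) \<partial>measure_pmf (bernoulli_pmf e))"
    unfolding mixm_def by (rule nn_integral_bind[OF f kern])
  also have "\<dots> = (\<integral>\<^sup>+y. f y \<partial>N) * ennreal e + (\<integral>\<^sup>+y. f y \<partial>M) * ennreal (1 - e)"
    using e0 e1 by (subst nn_integral_bernoulli_pmf) auto
  finally show ?thesis by (simp add: mult.commute add.commute)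
qed

lemma emeasure_mix:
  assumes "S \<in> sets borel"
  shows "emeasure (mixm e M N) S = ennreal (1 - e) * emeasure M S + ennreal e * emeasure N S"
proof -
  have "emeasure (mixm e M N) S = (\<integral>\<^sup>+x. indicator S x \<partial>mixm e M N)"
    using assms sets_mix by simp
  also have "\<dots> = ennreal (1 - e) * (\<integral>\<^sup>+x. indicator S x \<partial>M) + ennreal e * (\<integral>\<^sup>+x. indicator S x \<partial>N)"
    using assms by (intro nn_mix) auto
  finally show ?thesis using assms sM sN by simp
qed

lemma prob_mix: "prob_space (mixm e M N)"
proof
  have "emeasure (mixm e M N) UNIV = ennreal (1 - e) * emeasure M UNIV + ennreal e * emeasure N UNIV"
    by (rule emeasure_mix) auto
  also have "\<dots> = 1"
    using prob_space.emeasure_space_1[OF pM] prob_space.emeasure_space_1[OF pN]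
      sets_eq_imp_space_eq[OF sM] sets_eq_imp_space_eq[OF sN] e0 e1
    by (simp flip: ennreal_plus)
  finally show "emeasure (mixm e M N) (space (mixm e M N)) = 1" by (simp add: space_mix)
qed

lemma measure_mix:
  assumes "S \<in> sets borel"
  shows "measure (mixm e M N) S = (1 - e) * measure M S + e * measure N S"
proof -
  have "ennreal (measure (mixm e M N) S) = ennreal ((1 - e) * measure M S + e * measure N S)"
    using emeasure_mix[OF assms] finite_measure.emeasure_eq_measure[OF fin_of_prob[OF prob_mix]]
      finite_measure.emeasure_eq_measure[OF fin_of_prob[OF pM]] finite_measure.emeasure_eq_measure[OF fin_of_prob[OF pN]] e0 e1
    by (simp add: ennreal_plus ennreal_mult measure_nonneg)
  then show ?thesis using e0 e1 by (subst (asm) ennreal_inj) auto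
qed

lemma AE_mix:
  assumes "AE x in M. 0 \<le> x" "AE x in N. 0 \<le> x"
  shows "AE x in mixm e M N. 0 \<le> x"
  unfolding mixm_def using assms
  by (subst AE_bind[OF kern]) (auto simp: AE_measure_pmf_iff)

end

definition twopt :: "real \<Rightarrow> real \<Rightarrow> real measure" where
  "twopt q b = mixm q (return borel 0) (return borel b)"

lemma twopt_props:
  assumes q0: "0 \<le> q" and q1: "q \<le> 1" and b0: "0 \<le> b"
  shows "prob_space (twopt q b)" "sets (twopt q b) = sets borel"
    "AE x in twopt q b. 0 \<le> x"
    "\<And>f. f \<in> borel_measurable borel \<Longrightarrow>
       (\<integral>\<^sup>+x. f x \<partial>twopt q b) = ennreal (1 - q) * f 0 + ennreal q * f b"
proof -
  interpret mixctx q "return borel 0" "return borel b"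
    using q0 q1 by (intro mixctx.intro) (simp_all add: prob_space_return)
  show "prob_space (twopt q b)" unfolding twopt_def by (rule prob_mix)
  show "sets (twopt q b) = sets borel" unfolding twopt_def by (rule sets_mix)
  show "AE x in twopt q b. 0 \<le> x" unfolding twopt_def
    using b0 by (intro AE_mix) (simp_all add: AE_return)
  fix f :: "real \<Rightarrow> ennreal" assume f: "f \<in> borel_measurable borel"
  show "(\<integral>\<^sup>+x. f x \<partial>twopt q b) = ennreal (1 - q) * f 0 + ennreal q * f b"
    unfolding twopt_def nn_mix[OF f] using f by (simp add: nn_integral_return)
qed

lemma markov:
  assumes "prob_space M" "sets M = sets borel" "AE x in M. 0 \<le> x"
    "(\<integral>\<^sup>+x. ennreal x \<partial>M) = ennreal m"
  shows "ennreal (REV_price p M) \<le> ennreal m"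
proof (cases "p \<le> 0")
  case True
  then have "REV_price p M \<le> 0" unfolding REV_price_def
    by (simp add: mult_nonpos_nonneg measure_nonneg)
  then show ?thesis by (simp add: ennreal_neg)
next
  case False
  have S: "{x. p \<le> x} \<in> sets M" using assms(2) by simp
  have "ennreal (REV_price p M) = ennreal p * emeasure M {x. p \<le> x}"
    unfolding REV_price_def using False finite_measure.emeasure_eq_measure[OF fin_of_prob[OF assms(1)]]
    by (simp add: ennreal_mult)
  also have "\<dots> = (\<integral>\<^sup>+x. ennreal p * indicator {x. p \<le> x} x \<partial>M)"
    using S by (simp add: nn_integral_cmult_indicator)
  also have "\<dots> \<le> (\<integral>\<^sup>+x. ennreal x \<partial>M)"
    using assms(3) by (intro nn_integral_mono_AE) (auto elim!: eventually_mono split: split_indicator)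
  finally show ?thesis using assms(4) by simp
qed


lemma F_mean_nn:
  assumes "F \<in> F_class \<mu> \<sigma>" "\<mu> \<ge> 0"
  shows "(\<integral>\<^sup>+x. ennreal x \<partial>F) = ennreal \<mu>"
  using assms unfolding F_class_def nonneg_dist_def
  by (subst nn_integral_eq_integral) auto

lemma construct:
  assumes mu: "\<mu> > 0" and F: "F \<in> F_class \<mu> \<sigma>"
    and V: "(\<integral>\<^sup>+ x. ennreal ((x - \<mu>)\<^sup>2) \<partial>F) = ennreal v"
    and v0: "0 \<le> v" and vs: "v < \<sigma>\<^sup>2" and epos: "0 < e" and elt1: "e < 1"
  shows "\<exists>F'. F' \<in> F_class_eq \<mu> \<sigma> \<and>
     (\<forall>p. ennreal (REV_price p F') \<le> ennreal (1 - e) * ennreal (REV_price p F) + ennreal (e * \<mu>)) \<and>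
     (\<forall>p\<ge>0. (1 - e) * REV_price p F \<le> REV_price p F')"
proof -
  define w where "w = (\<sigma>\<^sup>2 - (1 - e) * v) / e"
  define q where "q = \<mu>\<^sup>2 / (w + \<mu>\<^sup>2)"
  define b where "b = (w + \<mu>\<^sup>2) / \<mu>"
  have "(1 - e) * v \<le> v" using epos elt1 v0 by (intro mult_left_le_one_le) auto
  then have w0: "w > 0" unfolding w_def using epos vs by (intro divide_pos_pos) auto
  have wm: "0 < w + \<mu>\<^sup>2" using w0 by (intro add_pos_nonneg) auto
  have q0: "0 < q" using wm mu unfolding q_def by (intro divide_pos_pos) auto
  have q1: "q \<le> 1" using wm w0 mu unfolding q_def by (subst divide_le_eq_1) auto
  have b0: "0 < b" using wm mu unfolding b_def by auto
  have qb: "q * b = \<mu>"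
  proof -
    have "q * b = (\<mu> * \<mu>) * (w + \<mu>\<^sup>2) / ((w + \<mu>\<^sup>2) * \<mu>)"
      unfolding q_def b_def by (simp add: power2_eq_square)
    also have "\<dots> = \<mu>" using wm mu by simp
    finally show ?thesis .
  qed
  have varG: "(1 - q) * \<mu>\<^sup>2 + q * (b - \<mu>)\<^sup>2 = w"
  proof -
    have mb: "\<mu> * b = w + \<mu>\<^sup>2" unfolding b_def using mu by simp
    have "(1 - q) * \<mu>\<^sup>2 + q * (b - \<mu>)\<^sup>2 = \<mu>\<^sup>2 - 2 * \<mu> * (q * b) + (q * b) * b"
      by (simp add: power2_eq_square algebra_simps)
    also have "\<dots> = w" unfolding qb using mb by (simp add: power2_eq_square algebra_simps)
    finally show ?thesis .
  qed
  define G where "G = twopt q b"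
  note G = twopt_props[OF less_imp_le[OF q0] q1 less_imp_le[OF b0], folded G_def]
  have Fd: "nonneg_dist F" "integrable F (\<lambda>x. x)" "(\<integral>x. x \<partial>F) = \<mu>"
    using F by (auto simp: F_class_def)
  interpret mixctx e F G
    using Fd(1) G(1,2) epos elt1 by (intro mixctx.intro) (auto simp: nonneg_dist_def)
  define F' where "F' = mixm e F G"
  have nd': "nonneg_dist F'" unfolding nonneg_dist_def F'_def
    using prob_mix sets_mix AE_mix[of] Fd(1) G(3) by (auto simp: nonneg_dist_def)
  have meanF: "(\<integral>\<^sup>+x. ennreal x \<partial>F) = ennreal \<mu>" using F_mean_nn[OF F] mu by simp
  have meanG: "(\<integral>\<^sup>+x. ennreal x \<partial>G) = ennreal \<mu>" using G(4)[of "\<lambda>x. ennreal x"] qb b0 q0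
    by (simp add: ennreal_mult[symmetric])
  have mean': "(\<integral>\<^sup>+x. ennreal x \<partial>F') = ennreal \<mu>"
    unfolding F'_def using meanF meanG epos elt1 mu
    by (simp add: nn_mix ennreal_mult[symmetric] ennreal_plus[symmetric] algebra_simps)
  have AE': "AE x in F'. 0 \<le> x" using nd' by (simp add: nonneg_dist_def)
  have int': "integrable F' (\<lambda>x. x)"
    by (rule integrableI_nonneg) (use AE' mean' nd' in \<open>auto simp: nonneg_dist_def\<close>)
  have intv': "(\<integral>x. x \<partial>F') = \<mu>"
    using integral_eq_nn_integral[of "\<lambda>x. x" F'] AE' mean' nd' mu by (auto simp: nonneg_dist_def)
  have VG: "(\<integral>\<^sup>+ x. ennreal ((x - \<mu>)\<^sup>2) \<partial>G) = ennreal w"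
  proof -
    have "(\<integral>\<^sup>+ x. ennreal ((x - \<mu>)\<^sup>2) \<partial>G) = ennreal (1 - q) * ennreal ((0 - \<mu>)\<^sup>2) + ennreal q * ennreal ((b - \<mu>)\<^sup>2)"
      by (rule G(4)) simp
    also have "\<dots> = ennreal ((1 - q) * \<mu>\<^sup>2 + q * (b - \<mu>)\<^sup>2)"
      using q0 q1 by (simp add: ennreal_plus ennreal_mult)
    finally show ?thesis using varG by simp
  qed
  have V': "(\<integral>\<^sup>+ x. ennreal ((x - \<mu>)\<^sup>2) \<partial>F') = ennreal (\<sigma>\<^sup>2)"
  proof -
    have "(\<integral>\<^sup>+ x. ennreal ((x - \<mu>)\<^sup>2) \<partial>F') = ennreal (1 - e) * ennreal v + ennreal e * ennreal w"
      unfolding F'_def using V VG by (subst nn_mix) auto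
    also have "\<dots> = ennreal ((1 - e) * v + e * w)"
      using epos elt1 v0 w0 by (simp add: ennreal_plus ennreal_mult)
    also have "(1 - e) * v + e * w = \<sigma>\<^sup>2" unfolding w_def using epos by (simp add: less_imp_neq[symmetric])
    finally show ?thesis .
  qed
  have inF': "F' \<in> F_class_eq \<mu> \<sigma>"
    unfolding F_class_eq_def using nd' int' intv' V' by auto
  have revF': "REV_price p F' = (1 - e) * REV_price p F + e * REV_price p G" for p
    unfolding REV_price_def F'_def by (subst measure_mix) (auto simp: algebra_simps)
  have RG: "REV_price p G \<le> \<mu>" for p
    using markov[OF G(1,2,3) meanG, of p] mu by simp
  have RGn: "0 \<le> REV_price p G" if "p \<ge> 0" for p
    using that by (simp add: REV_price_def measure_nonneg)
  have RFn: "0 \<le> REV_price p F" if "p \<ge> 0" for p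
    using that by (simp add: REV_price_def measure_nonneg)
  have b1: "ennreal (REV_price p F') \<le> ennreal (1 - e) * ennreal (REV_price p F) + ennreal (e * \<mu>)" for p
  proof (cases "p \<ge> 0")
    case True
    have "REV_price p F' \<le> (1 - e) * REV_price p F + e * \<mu>"
      unfolding revF' using RG[of p] epos by (simp add: mult_left_mono)
    then have "ennreal (REV_price p F') \<le> ennreal ((1 - e) * REV_price p F + e * \<mu>)"
      by (rule ennreal_leI)
    also have "\<dots> = ennreal (1 - e) * ennreal (REV_price p F) + ennreal (e * \<mu>)"
      using RFn[OF True] epos elt1 mu by (simp add: ennreal_mult ennreal_plus)
    finally show ?thesis .
  next
    case False
    then have "REV_price p F' \<le> 0" unfolding REV_price_def
      by (simp add: mult_nonpos_nonneg measure_nonneg)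
    then show ?thesis by (simp add: ennreal_neg)
  qed
  have b2: "(1 - e) * REV_price p F \<le> REV_price p F'" if "p \<ge> 0" for p
    unfolding revF' using RGn[OF that] epos by simp
  show ?thesis using inF' b1 b2 by blast
qed


lemma REV_price_meas:
  assumes "prob_space F" "sets F = sets borel"
  shows "(\<lambda>p. REV_price p F) \<in> borel_measurable borel"
proof -
  interpret finite_measure F using assms(1) by (rule fin_of_prob)
  have "mono (\<lambda>p. - measure F {x. p \<le> x})"
    by (rule monoI) (auto intro!: finite_measure_mono simp: assms(2))
  then have "(\<lambda>p. - measure F {x. p \<le> x}) \<in> borel_measurable borel"
    by (rule borel_measurable_mono)
  then have "(\<lambda>p. - (- measure F {x. p \<le> x})) \<in> borel_measurable borel"
    by measurable
  then show ?thesis unfolding REV_price_def by simp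
qed

lemma OPT_pos:
  assumes mu: "\<mu> > 0" and F: "F \<in> F_class \<mu> \<sigma>"
  shows "OPT F > 0"
proof -
  have Fd: "prob_space F" "sets F = sets borel" "AE x in F. 0 \<le> x" "integrable F (\<lambda>x. x)" "(\<integral>x. x \<partial>F) = \<mu>"
    using F by (auto simp: F_class_def nonneg_dist_def)
  interpret prob_space F by (rule Fd(1))
  have m: "measure F {x. \<mu>/2 \<le> x} > 0"
  proof (rule ccontr)
    assume "\<not> ?thesis"
    then have "measure F {x. \<mu>/2 \<le> x} = 0" using measure_nonneg[of F] by (simp add: not_less order.antisym)
    then have "emeasure F {x. \<mu>/2 \<le> x} = 0" using emeasure_eq_measure by simp
    moreover have "{x. \<mu>/2 \<le> x} \<in> sets F" using Fd(2) by simp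
    ultimately have "AE x in F. x < \<mu>/2"
      using AE_iff_measurable[of "{x. \<mu>/2 \<le> x}" F "\<lambda>x. x < \<mu>/2"]
      by (auto simp: sets_eq_imp_space_eq[OF Fd(2)] not_less)
    then have "(\<integral>x. x \<partial>F) \<le> (\<integral>x. \<mu>/2 \<partial>F)"
      by (intro integral_mono_AE Fd(4)) (auto elim!: eventually_mono)
    then show False using Fd(5) mu by (simp add: prob_space)
  qed
  have "0 < \<mu>/2 * measure F {x. \<mu>/2 \<le> x}" by (rule mult_pos_pos[OF _ m]) (use mu in simp)
  then have "REV_price (\<mu>/2) F > 0" by (simp only: REV_price_def)
  then have "0 < ennreal (REV_price (\<mu>/2) F)" by simp
  also have "\<dots> \<le> OPT F" unfolding OPT_def using mu by (intro SUP_upper) auto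
  finally show ?thesis .
qed

lemma ratio_le:
  assumes mu: "\<mu> > 0" and A: "nonneg_dist A" and F: "F \<in> F_class \<mu> \<sigma>"
  shows "ratio A F \<le> (SUP F\<in>F_class_eq \<mu> \<sigma>. ratio A F)" (is "_ \<le> ?S")
proof -
  define V where "V = (\<integral>\<^sup>+ x. ennreal ((x - \<mu>)\<^sup>2) \<partial>F)"
  have Vle: "V \<le> ennreal (\<sigma>\<^sup>2)" using F by (simp add: F_class_def V_def)
  show ?thesis
  proof (cases "V = ennreal (\<sigma>\<^sup>2)")
    case True
    then have "F \<in> F_class_eq \<mu> \<sigma>" using F by (simp add: F_class_def F_class_eq_def V_def)
    then show ?thesis by (rule SUP_upper)
  next
    case False
    then have Vlt: "V < ennreal (\<sigma>\<^sup>2)" using Vle by simp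
    then obtain v where v: "V = ennreal v" "0 \<le> v"
      by (cases V) auto
    have vs: "v < \<sigma>\<^sup>2" using Vlt v by (simp add: ennreal_less_iff)
    have Ad: "prob_space A" "sets A = sets borel" "AE p in A. 0 \<le> p"
      using A by (auto simp: nonneg_dist_def)
    have Fd: "prob_space F" "sets F = sets borel" "AE x in F. 0 \<le> x"
      using F by (auto simp: F_class_def nonneg_dist_def)
    have mF: "(\<integral>\<^sup>+x. ennreal x \<partial>F) = ennreal \<mu>" using F_mean_nn[OF F] mu by simp
    have mkF: "ennreal (REV_price p F) \<le> ennreal \<mu>" for p by (rule markov[OF Fd mF])
    have Ole: "OPT F \<le> ennreal \<mu>" unfolding OPT_def by (rule SUP_least) (rule mkF)
    have A1: "emeasure A (space A) = 1" using Ad(1) by (rule prob_space.emeasure_space_1)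
    have Rle: "REV A F \<le> ennreal \<mu>"
    proof -
      have "REV A F \<le> (\<integral>\<^sup>+p. ennreal \<mu> \<partial>A)" unfolding REV_def
        by (intro nn_integral_mono mkF)
      also have "\<dots> = ennreal \<mu>" using A1 by simp
      finally show ?thesis .
    qed
    obtain ov where ov: "OPT F = ennreal ov" "0 \<le> ov" using Ole by (cases "OPT F") (auto simp: top_unique)
    obtain r where r: "REV A F = ennreal r" "0 \<le> r" using Rle by (cases "REV A F") (auto simp: top_unique)
    have key: "ennreal ((1 - e) * ov / ((1 - e) * r + e * \<mu>)) \<le> ?S" if e: "0 < e" "e < 1" for e
    proof -
      obtain F' where F': "F' \<in> F_class_eq \<mu> \<sigma>"
        and b1: "\<And>p. ennreal (REV_price p F') \<le> ennreal (1 - e) * ennreal (REV_price p F) + ennreal (e * \<mu>)"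
        and b2: "\<And>p. p \<ge> 0 \<Longrightarrow> (1 - e) * REV_price p F \<le> REV_price p F'"
        using construct[OF mu F v(1)[unfolded V_def] v(2) vs e] by blast
      define d where "d = (1 - e) * r + e * \<mu>"
      have d0: "d > 0" unfolding d_def using e r(2) mu by (intro add_nonneg_pos) auto
      have meas: "(\<lambda>p. ennreal (REV_price p F)) \<in> borel_measurable A"
        using REV_price_meas[OF Fd(1,2)] Ad(2) by (simp cong: measurable_cong_sets)
      have R'le: "REV A F' \<le> ennreal d"
      proof -
        have "REV A F' \<le> (\<integral>\<^sup>+p. ennreal (1 - e) * ennreal (REV_price p F) + ennreal (e * \<mu>) \<partial>A)"
          unfolding REV_def by (intro nn_integral_mono b1)
        also have "\<dots> = ennreal (1 - e) * REV A F + ennreal (e * \<mu>)"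
          unfolding REV_def using meas A1 by (simp add: nn_integral_add nn_integral_cmult)
        also have "\<dots> = ennreal d" unfolding d_def r(1) using e r(2) mu
          by (simp add: ennreal_plus ennreal_mult)
        finally show ?thesis .
      qed
      have O': "ennreal ((1 - e) * ov) \<le> OPT F'"
      proof -
        have "ennreal ((1 - e) * ov) = ennreal (1 - e) * OPT F" using ov e by (simp add: ennreal_mult)
        also have "\<dots> = (SUP p\<in>{0..}. ennreal (1 - e) * ennreal (REV_price p F))"
          unfolding OPT_def by (rule SUP_mult_left_ennreal)
        also have "\<dots> \<le> OPT F'" unfolding OPT_def
        proof (rule SUP_mono)
          fix p :: real assume p: "p \<in> {0..}"
          show "\<exists>p'\<in>{0..}. ennreal (1 - e) * ennreal (REV_price p F) \<le> ennreal (REV_price p' F')"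
          proof (intro bexI[OF _ p])
            have "0 \<le> REV_price p F" using p by (simp add: REV_price_def)
            then have "ennreal (1 - e) * ennreal (REV_price p F) = ennreal ((1 - e) * REV_price p F)"
              using e by (simp add: ennreal_mult)
            also have "\<dots> \<le> ennreal (REV_price p F')" using b2[of p] p by (intro ennreal_leI) auto
            finally show "ennreal (1 - e) * ennreal (REV_price p F) \<le> ennreal (REV_price p F')" .
          qed
        qed
        finally show ?thesis .
      qed
      have "ennreal ((1 - e) * ov / d) \<le> ratio A F'"
      proof (cases "REV A F' = 0")
        case True then show ?thesis by (simp add: ratio_def)
      next
        case False
        obtain r' where r': "REV A F' = ennreal r'" "0 \<le> r'" using R'le by (cases "REV A F'") (auto simp: top_unique)
        have r'0: "r' > 0" using False r' by (auto simp: le_less)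
        have r'd: "r' \<le> d" using R'le r' d0 by (simp add: ennreal_le_iff)
        have "ennreal ((1 - e) * ov / d) \<le> ennreal ((1 - e) * ov / r')"
          using e ov(2) r'0 r'd by (intro ennreal_leI frac_le) auto
        also have "\<dots> = ennreal ((1 - e) * ov) / ennreal r'"
          using e ov(2) r'0 by (simp add: divide_ennreal)
        also have "\<dots> \<le> OPT F' / REV A F'" unfolding r'(1) by (rule divide_right_mono_ennreal[OF O'])
        finally show ?thesis using False by (simp add: ratio_def)
      qed
      also have "\<dots> \<le> ?S" using F' by (rule SUP_upper)
      finally show ?thesis unfolding d_def .
    qed
    show ?thesis
    proof (cases "r = 0")
      case False
      then have r0: "r > 0" using r(2) by simp
      have rat: "ratio A F = ennreal (ov / r)"
        using r0 ov r by (simp add: ratio_def divide_ennreal)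
      have lim0: "((\<lambda>e. (1 - e) * ov / ((1 - e) * r + e * \<mu>)) \<longlongrightarrow> (1 - 0) * ov / ((1 - 0) * r + 0 * \<mu>)) (at_right 0)"
        using r0 by (intro tendsto_intros) auto
      have lim: "((\<lambda>e. ennreal ((1 - e) * ov / ((1 - e) * r + e * \<mu>))) \<longlongrightarrow> ennreal (ov / r)) (at_right 0)"
        using tendsto_ennrealI[OF lim0] by simp
      have ev: "eventually (\<lambda>e. ennreal ((1 - e) * ov / ((1 - e) * r + e * \<mu>)) \<le> ?S) (at_right (0::real))"
        unfolding eventually_at_right_field by (intro exI[of _ 1]) (auto intro: key)
      have "ennreal (ov / r) \<le> ?S"
        by (rule tendsto_le[OF trivial_limit_at_right_real tendsto_const lim ev])
      then show ?thesis using rat by simp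
    next
      case True
      have rat: "ratio A F = \<top>" using True r by (simp add: ratio_def)
      have o0: "ov > 0" using OPT_pos[OF mu F] ov by simp
      have nle: "ennreal (real n) \<le> ?S" if n: "n \<ge> 1" for n :: nat
      proof -
        define e where "e = ov / (ov + real n * \<mu>)"
        have pos: "ov + real n * \<mu> > 0" using o0 mu by (intro add_pos_nonneg) auto
        have nmu: "real n * \<mu> > 0" using n mu by simp
        have e0: "0 < e" unfolding e_def using o0 pos by simp
        have e1: "e < 1" unfolding e_def using pos nmu by simp
        have h1: "1 - e = real n * \<mu> / (ov + real n * \<mu>)" unfolding e_def using pos by (simp add: field_simps)
        have "(1 - e) * ov / ((1 - e) * r + e * \<mu>) = (real n * \<mu> * ov / (ov + real n * \<mu>)) / (ov * \<mu> / (ov + real n * \<mu>))"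
        proof -
          have h2: "e * \<mu> = ov * \<mu> / (ov + real n * \<mu>)" unfolding e_def by simp
          have "(1 - e) * ov / ((1 - e) * r + e * \<mu>) = ((1 - e) * ov) / (e * \<mu>)" using True by simp
          also have "\<dots> = (real n * \<mu> * ov / (ov + real n * \<mu>)) / (ov * \<mu> / (ov + real n * \<mu>))"
            unfolding h1 h2 by simp
          finally show ?thesis .
        qed
        also have "\<dots> = (real n * (\<mu> * ov)) / (\<mu> * ov)" using pos by (simp add: ac_simps)
        also have "\<dots> = real n" using o0 mu by simp
        finally have "(1 - e) * ov / ((1 - e) * r + e * \<mu>) = real n" .
        then show ?thesis using key[OF e0 e1] by simp
      qed
      have "?S = \<top>"
      proof (rule ccontr)
        assume "?S \<noteq> \<top>"
        then obtain s where s: "?S = ennreal s" "0 \<le> s" by (cases ?S) auto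
        define n where "n = nat \<lceil>s\<rceil> + 1"
        have "ennreal (real n) \<le> ennreal s" using nle[of n] s by (simp add: n_def)
        then have "real n \<le> s" using s(2) by (simp add: ennreal_le_iff)
        moreover have "real n > s" unfolding n_def by linarith
        ultimately show False by simp
      qed
      then show ?thesis by (metis top_greatest)
    qed
  qed
qed

theorem lemma5:
  fixes \<mu> \<sigma> :: real
  assumes "\<mu> > 0" and "\<sigma> \<ge> 0"
  shows "(\<forall>A. nonneg_dist A \<longrightarrow>
            (SUP F\<in>F_class \<mu> \<sigma>. ratio A F) = (SUP F\<in>F_class_eq \<mu> \<sigma>. ratio A F))
       \<and> (INF A\<in>{A. nonneg_dist A}. SUP F\<in>F_class \<mu> \<sigma>. ratio A F)
           = (INF A\<in>{A. nonneg_dist A}. SUP F\<in>F_class_eq \<mu> \<sigma>. ratio A F)"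
proof -
  have sub: "F_class_eq \<mu> \<sigma> \<subseteq> F_class \<mu> \<sigma>" by (auto simp: F_class_def F_class_eq_def)
  have eq: "(SUP F\<in>F_class \<mu> \<sigma>. ratio A F) = (SUP F\<in>F_class_eq \<mu> \<sigma>. ratio A F)"
    if A: "nonneg_dist A" for A
  proof (rule order.antisym)
    show "(SUP F\<in>F_class \<mu> \<sigma>. ratio A F) \<le> (SUP F\<in>F_class_eq \<mu> \<sigma>. ratio A F)"
      by (rule SUP_least) (rule ratio_le[OF assms(1) A])
    show "(SUP F\<in>F_class_eq \<mu> \<sigma>. ratio A F) \<le> (SUP F\<in>F_class \<mu> \<sigma>. ratio A F)"
      by (rule SUP_subset_mono[OF sub]) simp
  qed
  show ?thesis using eq by (auto intro!: INF_cong)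
qed

end
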